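(* Let $n,K\ge1$, $\varepsilon>0$, $\Delta^{\inf}\in\mathbb{R}$, $c\ge0$ (playing the role of $f(x^0)-f^{\inf}$), ${\bf L}\in\mathbb{S}^d_{++}$, ${\bf L}_1,\dots,{\bf L}_n\in\mathbb{S}^d_{++}$, and let ${\bf S}_1,\dots,{\bf S}_n$ be random matrices in $\mathbb{S}^d_+$ with $\mathbb{E}[{\bf S}_i]={\bf I}_d$ and finite second moments. For ${\bf D}\in\mathbb{S}^d_{++}$ let $\lambda_{{\bf D}}:=\max_i\lambda_{\max}\big(\mathbb{E}[{\bf L}_i^{1/2}({\bf S}_i-{\bf I}_d){\bf D}{\bf L}{\bf D}({\bf S}_i-{\bf I}_d){\bf L}_i^{1/2}]\big)$. Then the set of ${\bf D}\in\mathbb{S}^d_{++}$ satisfying $${\bf D}{\bf L}{\bf D}\preceq{\bf D},\qquad\lambda_{{\bf D}}\le\frac nK,\qquad 4\Delta^{\inf}\lambda_{{\bf D}}\le n\varepsilon^2\det({\bf D})^{1/d},\qquad K\ge\frac{12c}{\det({\bf D})^{1/d}\varepsilon^2}$$ is convex.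
   Context: $\mathbb{S}^d_{+}$/$\mathbb{S}^d_{++}$: symmetric positive semidefinite/definite $d\times d$ matrices; $\preceq$ is the Loewner order; $\lambda_{\max}$ is the largest eigenvalue. *)

theory Defs
  imports "HOL-Probability.Probability"
begin

definition sym_mat :: "real^'n^'n \<Rightarrow> bool" where
  "sym_mat A \<longleftrightarrow> transpose A = A"

definition psd_mat :: "real^'n^'n \<Rightarrow> bool" where
  "psd_mat A \<longleftrightarrow> sym_mat A \<and> (\<forall>x. 0 \<le> x \<bullet> (A *v x))"

definition pd_mat :: "real^'n^'n \<Rightarrow> bool" where
  "pd_mat A \<longleftrightarrow> sym_mat A \<and> (\<forall>x. x \<noteq> 0 \<longrightarrow> 0 < x \<bullet> (A *v x))"

definition loewner_le :: "real^'n^'n \<Rightarrow> real^'n^'n \<Rightarrow> bool" where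
  "loewner_le A B \<longleftrightarrow> psd_mat (B - A)"

definition mat_sqrt :: "real^'n^'n \<Rightarrow> real^'n^'n" where
  "mat_sqrt A = (THE B. psd_mat B \<and> B ** B = A)"

definition lambda_max :: "real^'n^'n \<Rightarrow> real" where
  "lambda_max A = Max {l. \<exists>v. v \<noteq> 0 \<and> A *v v = l *s v}"

definition mat_expect :: "'w measure \<Rightarrow> ('w \<Rightarrow> real^'n^'m) \<Rightarrow> real^'n^'m" where
  "mat_expect M X = (\<chi> i j. integral\<^sup>L M (\<lambda>w. X w $ i $ j))"

definition lambda_D ::
  "'w measure \<Rightarrow> real^'n^'n \<Rightarrow> (nat \<Rightarrow> real^'n^'n) \<Rightarrow> (nat \<Rightarrow> 'w \<Rightarrow> real^'n^'n)
    \<Rightarrow> nat \<Rightarrow> real^'n^'n \<Rightarrow> real" where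
  "lambda_D M L Ls S n D = Max ((\<lambda>i. lambda_max (mat_expect M (\<lambda>w.
      mat_sqrt (Ls i) ** (S i w - mat 1) ** D ** L ** D ** (S i w - mat 1) ** mat_sqrt (Ls i))))
      ` {1..n})"

end

theory Submission
  imports Defs
begin

lemma sym_inner:
  fixes A :: "real^'n^'n"
  assumes "transpose A = A"
  shows "x \<bullet> (A *v y) = (A *v x) \<bullet> y"
  by (metis assms dot_lmul_matrix inner_commute transpose_matrix_vector)

lemma spectral_step:
  fixes A :: "real^'n^'n"
  assumes sym: "transpose A = A" and fin: "finite B" and po: "pairwise orthogonal B"
    and eig: "\<forall>b\<in>B. norm b = 1 \<and> (\<exists>l. A *v b = l *s b)" and card: "card B < CARD('n)"
  shows "\<exists>x. norm x = 1 \<and> (\<forall>b\<in>B. orthogonal b x) \<and> (\<exists>l. A *v x = l *s x)"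
proof -
  define W where "W = {y. \<forall>x \<in> B. orthogonal x y}"
  have subW: "subspace W" unfolding W_def by (rule subspace_orthogonal_to_vectors)
  have "0 \<notin> B" using eig by force
  then have ind: "independent B" using po pairwise_orthogonal_independent by blast
  have "dim B < DIM(real^'n)" using dim_eq_card_independent[OF ind] card by simp
  then obtain z where z: "z \<noteq> 0" "\<And>y. y \<in> span B \<Longrightarrow> orthogonal z y"
    using orthogonal_to_subspace_exists by blast
  have zW: "z \<in> W" unfolding W_def using z(2) span_base orthogonal_commute by blast
  define T where "T = W \<inter> sphere 0 1"
  have "closed W" using subW closed_subspace by blast
  then have cT: "compact T" unfolding T_def by (intro closed_Int_compact) auto
  have "z /\<^sub>R norm z \<in> T" unfolding T_def using zW z(1) subW
    by (simp add: subspace_scale norm_divide)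
  then have neT: "T \<noteq> {}" by blast
  have contf: "continuous_on T (\<lambda>x. x \<bullet> (A *v x))"
    by (intro continuous_intros linear_continuous_on matrix_vector_mul_linear bounded_linear_intros)
  obtain x0 where x0: "x0 \<in> T" and mx: "\<forall>y\<in>T. y \<bullet> (A *v y) \<le> x0 \<bullet> (A *v x0)"
    using continuous_attains_sup[OF cT neT contf] by blast
  define mu where "mu = x0 \<bullet> (A *v x0)"
  have x0W: "x0 \<in> W" and nx0: "norm x0 = 1" using x0 unfolding T_def by auto
  have bound: "y \<bullet> (A *v y) \<le> mu * (y \<bullet> y)" if "y \<in> W" for y
  proof (cases "y = 0")
    case True then show ?thesis by simp
  next
    case False
    have "y /\<^sub>R norm y \<in> T" unfolding T_def using that False subW
      by (simp add: subspace_scale norm_divide)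
    then have "(y /\<^sub>R norm y) \<bullet> (A *v (y /\<^sub>R norm y)) \<le> mu" using mx mu_def by blast
    then have "(y \<bullet> (A *v y)) / (norm y)^2 \<le> mu"
      by (simp add: matrix_vector_mult_scaleR power2_eq_square divide_inverse mult_ac)
    moreover have "(norm y)^2 > 0" using False by simp
    ultimately show ?thesis by (simp add: divide_le_eq power2_norm_eq_inner mult.commute)
  qed
  have inv: "A *v y \<in> W" if "y \<in> W" for y
  proof -
    have "orthogonal b (A *v y)" if b: "b \<in> B" for b
    proof -
      obtain l where l: "A *v b = l *s b" using eig b by blast
      have "b \<bullet> (A *v y) = (A *v b) \<bullet> y" by (rule sym_inner[OF sym])
      also have "\<dots> = l * (b \<bullet> y)" by (simp add: l scalar_mult_eq_scaleR)
      also have "\<dots> = 0" using \<open>y \<in> W\<close> b unfolding W_def orthogonal_def by simp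
      finally show ?thesis unfolding orthogonal_def .
    qed
    then show ?thesis unfolding W_def by blast
  qed
  define y where "y = mu *\<^sub>R x0 - A *v x0"
  have yW: "y \<in> W" unfolding y_def using x0W inv subW
    by (simp add: subspace_diff subspace_scale)
  have "y = 0"
  proof (rule ccontr)
    assume "y \<noteq> 0"
    then have yy: "y \<bullet> y > 0" by simp
    define c where "c = mu * (y \<bullet> y) - y \<bullet> (A *v y)"
    have c0: "c \<ge> 0" using bound[OF yW] c_def by simp
    define s where "s = (y \<bullet> y) / (c + 1)"
    have s0: "s > 0" using yy c0 s_def by simp
    have "x0 - s *\<^sub>R y \<in> W" using x0W yW subW by (simp add: subspace_diff subspace_scale)
    then have "(x0 - s *\<^sub>R y) \<bullet> (A *v (x0 - s *\<^sub>R y)) \<le> mu * ((x0 - s *\<^sub>R y) \<bullet> (x0 - s *\<^sub>R y))"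
      by (rule bound)
    moreover have "y \<bullet> (A *v x0) = (A *v y) \<bullet> x0" by (rule sym_inner[OF sym])
    moreover have "x0 \<bullet> x0 = 1" using nx0 by (simp add: norm_eq_1)
    moreover have "y \<bullet> (A *v x0) = mu * (x0 \<bullet> y) - y \<bullet> y"
      unfolding y_def by (simp add: inner_diff_left inner_commute)
    ultimately have "mu - 2 * s * (y \<bullet> (A *v x0)) + s^2 * (y \<bullet> (A *v y))
        \<le> mu * (1 - 2 * s * (x0 \<bullet> y) + s^2 * (y \<bullet> y))"
      unfolding mu_def
      by (simp add: matrix_vector_mult_diff_distrib matrix_vector_mult_scaleR inner_diff_left
          inner_diff_right inner_commute power2_eq_square algebra_simps)
    then have "2 * s * (y \<bullet> y) \<le> s^2 * c"
      using \<open>y \<bullet> (A *v x0) = mu * (x0 \<bullet> y) - y \<bullet> y\<close> unfolding c_def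
      by (simp add: algebra_simps power2_eq_square)
    then have "2 * (y \<bullet> y) \<le> s * c" using s0 by (simp add: power2_eq_square)
    moreover have "s * c < y \<bullet> y" unfolding s_def using yy c0
      by (simp add: field_simps)
    ultimately show False using yy by simp
  qed
  then have "A *v x0 = mu *s x0" unfolding y_def by (simp add: scalar_mult_eq_scaleR)
  moreover have "\<forall>b\<in>B. orthogonal b x0" using x0W W_def by blast
  ultimately show ?thesis using nx0 by blast
qed

lemma spectral_sets:
  fixes A :: "real^'n^'n"
  assumes sym: "transpose A = A"
  shows "k \<le> CARD('n) \<Longrightarrow> \<exists>B. finite B \<and> card B = k \<and> pairwise orthogonal B \<and>
            (\<forall>b\<in>B. norm b = 1 \<and> (\<exists>l. A *v b = l *s b))"
proof (induction k)
  case 0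
  show ?case by (rule exI[of _ "{}"]) auto
next
  case (Suc k)
  then obtain B where B: "finite B" "card B = k" "pairwise orthogonal B"
     "\<forall>b\<in>B. norm b = 1 \<and> (\<exists>l. A *v b = l *s b)" by auto
  then obtain x where x: "norm x = 1" "\<forall>b\<in>B. orthogonal b x" "\<exists>l. A *v x = l *s x"
    using spectral_step[OF sym B(1) B(3) B(4)] Suc.prems by auto
  have "x \<notin> B" using x(1,2) by (auto simp: orthogonal_def)
  have "pairwise orthogonal (insert x B)"
    unfolding pairwise_insert using B(3) x(2) orthogonal_commute by blast
  moreover have "card (insert x B) = Suc k" using B(1,2) \<open>x \<notin> B\<close> by simp
  moreover have "\<forall>b\<in>insert x B. norm b = 1 \<and> (\<exists>l. A *v b = l *s b)" using B(4) x(1,3) by blast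
  ultimately show ?case using B(1) by (intro exI[of _ "insert x B"]) simp
qed

definition diagm :: "('n::finite \<Rightarrow> real) \<Rightarrow> real^'n^'n" where
  "diagm l = (\<chi> i j. if i = j then l i else 0)"

lemma column_mul: "column j (A ** B) = A *v column j (B::real^'n^'m)"
  by (simp add: column_def matrix_matrix_mult_def matrix_vector_mult_def vec_eq_iff)

lemma column_diagm: "column j (U ** diagm l) = l j *s column j (U::real^'n^'m)"
  by (simp add: column_def matrix_matrix_mult_def diagm_def vec_eq_iff if_distrib if_distribR
       cong: if_cong)

lemma mat_eq_columns: "(\<And>j. column j A = column j B) \<Longrightarrow> A = (B::real^'n^'m)"
  by (simp add: column_def vec_eq_iff)

lemma spectral:
  fixes A :: "real^'n^'n"
  assumes sym: "transpose A = A"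
  shows "\<exists>U l. orthogonal_matrix U \<and> A = U ** diagm l ** transpose U \<and>
           (\<forall>j. A *v column j U = l j *s column j U)"
proof -
  obtain B where B: "finite B" "card B = CARD('n)" "pairwise orthogonal B"
     "\<forall>b\<in>B. norm b = 1 \<and> (\<exists>l. A *v b = l *s b)"
    using spectral_sets[OF sym order_refl] by blast
  obtain f where f: "bij_betw f (UNIV::'n set) B"
    using finite_same_card_bij[of "UNIV::'n set" B, OF finite B(1)] B(2) by force
  define U where "U = (\<chi> i j. f j $ i)"
  have cU: "column j U = f j" for j by (simp add: U_def column_def vec_eq_iff)
  have fB: "f j \<in> B" for j by (rule bij_betw_apply[OF f]) simp
  have "orthogonal_matrix U"
    unfolding orthogonal_matrix_orthonormal_columns cU
  proof (intro conjI allI impI)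
    show "norm (f i) = 1" for i using fB B(4) by blast
    show "orthogonal (f i) (f j)" if "i \<noteq> j" for i j
    proof -
      have "f i \<noteq> f j" using f that unfolding bij_betw_def inj_on_def by blast
      then show ?thesis using B(3) fB unfolding pairwise_def by blast
    qed
  qed
  define l where "l j = f j \<bullet> (A *v f j)" for j
  have ev: "A *v column j U = l j *s column j U" for j
  proof -
    obtain m where m: "A *v f j = m *s f j" using B(4) fB by blast
    have "norm (f j) = 1" using fB B(4) by blast
    then have "f j \<bullet> f j = 1" by (simp add: norm_eq_1)
    then have "l j = m" unfolding l_def m by (simp add: scalar_mult_eq_scaleR)
    then show ?thesis using m cU by simp
  qed
  have AU: "A ** U = U ** diagm l"
    by (rule mat_eq_columns, subst column_diagm) (simp add: column_mul ev)
  have "U ** transpose U = mat 1" using \<open>orthogonal_matrix U\<close> orthogonal_matrix_def by blast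
  then have "A = A ** U ** transpose U" by (metis matrix_mul_assoc matrix_mul_rid)
  also have "\<dots> = U ** diagm l ** transpose U" by (simp add: AU)
  finally show ?thesis using \<open>orthogonal_matrix U\<close> ev by blast
qed

lemma inner_mat_transpose: "x \<bullet> (U *v y) = (transpose U *v x) \<bullet> (y::real^'n)"
  for U :: "real^'n^'m"
  by (simp add: dot_lmul_matrix)

lemma diagm_mult: "diagm l *v c = (\<chi> i. l i * c $ i)"
  by (simp add: matrix_vector_mult_def diagm_def vec_eq_iff if_distrib if_distribR cong: if_cong)

lemma orth_TU: "orthogonal_matrix U \<Longrightarrow> transpose U ** U = mat 1"
  by (simp add: orthogonal_matrix_def)
lemma orth_UT: "orthogonal_matrix U \<Longrightarrow> U ** transpose U = mat 1"
  by (simp add: orthogonal_matrix_def)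

lemma orth_UUt_v: assumes "orthogonal_matrix U" shows "U *v (transpose U *v v) = (v::real^'n)"
  by (simp only: matrix_vector_mul_assoc orth_UT[OF assms] matrix_vector_mul_lid)
lemma orth_UtU_v: assumes "orthogonal_matrix U" shows "transpose U *v (U *v v) = (v::real^'n)"
  by (simp only: matrix_vector_mul_assoc orth_TU[OF assms] matrix_vector_mul_lid)

lemma orth_col_ne0: assumes "orthogonal_matrix (U::real^'n^'n)" shows "column j U \<noteq> 0"
proof -
  have "norm (column j U) = 1" using assms unfolding orthogonal_matrix_orthonormal_columns by blast
  then show ?thesis by auto
qed

lemma eigset_spectral:
  fixes A :: "real^'n^'n"
  assumes U: "orthogonal_matrix U" and A: "A = U ** diagm l ** transpose U"
    and ev: "\<forall>j. A *v column j U = l j *s column j U"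
  shows "{m. \<exists>v. v \<noteq> 0 \<and> A *v v = m *s v} = range l"
proof
  show "range l \<subseteq> {m. \<exists>v. v \<noteq> 0 \<and> A *v v = m *s v}"
    using ev orth_col_ne0[OF U] by blast
  show "{m. \<exists>v. v \<noteq> 0 \<and> A *v v = m *s v} \<subseteq> range l"
  proof
    fix m assume "m \<in> {m. \<exists>v. v \<noteq> 0 \<and> A *v v = m *s v}"
    then obtain v where v: "v \<noteq> 0" "A *v v = m *s v" by blast
    define c where "c = transpose U *v v"
    have vc: "v = U *v c" unfolding c_def using orth_UUt_v[OF U] by simp
    have "c \<noteq> 0" using v(1) vc by auto
    then obtain j where j: "c $ j \<noteq> 0" by (auto simp: vec_eq_iff)
    have "A *v v = U *v (diagm l *v c)" unfolding A c_def by (simp only: matrix_vector_mul_assoc matrix_mul_assoc)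
    then have "transpose U *v (A *v v) = diagm l *v c" using orth_UtU_v[OF U] by simp
    moreover have "transpose U *v (m *s v) = m *s c" unfolding c_def
      by (simp add: scalar_mult_eq_scaleR matrix_vector_mult_scaleR)
    ultimately have "diagm l *v c = m *s c" using v(2) by simp
    then have "l j * c $ j = m * c $ j" by (simp add: diagm_mult vec_eq_iff)
    then have "m = l j" using j by simp
    then show "m \<in> range l" by simp
  qed
qed

lemma lambda_max_props:
  fixes A :: "real^'n^'n"
  assumes sym: "transpose A = A"
  shows "\<exists>v. v \<noteq> 0 \<and> A *v v = lambda_max A *s v"
    and "x \<bullet> (A *v x) \<le> lambda_max A * (x \<bullet> x)"
proof -
  obtain U l where U: "orthogonal_matrix U" and A: "A = U ** diagm l ** transpose U"
    and ev: "\<forall>j. A *v column j U = l j *s column j U"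
    using spectral[OF sym] by blast
  have E: "{m. \<exists>v. v \<noteq> 0 \<and> A *v v = m *s v} = range l"
    by (rule eigset_spectral[OF U A ev])
  have lm: "lambda_max A = Max (range l)" unfolding lambda_max_def E ..
  have "lambda_max A \<in> range l" unfolding lm by (intro Max_in) auto
  then show "\<exists>v. v \<noteq> 0 \<and> A *v v = lambda_max A *s v" using E by blast
  have le: "l j \<le> lambda_max A" for j unfolding lm by (intro Max_ge) auto
  define c where "c = transpose U *v x"
  have cc: "c \<bullet> c = x \<bullet> x"
  proof -
    have "c \<bullet> c = x \<bullet> (U *v c)" unfolding c_def by (rule inner_mat_transpose[symmetric])
    also have "U *v c = x" unfolding c_def using orth_UUt_v[OF U] by simp
    finally show ?thesis .
  qed
  have "x \<bullet> (A *v x) = c \<bullet> (diagm l *v c)"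
  proof -
    have "A *v x = U *v (diagm l *v c)" unfolding A c_def by (simp only: matrix_vector_mul_assoc matrix_mul_assoc)
    then have "x \<bullet> (A *v x) = (transpose U *v x) \<bullet> (diagm l *v c)"
      using inner_mat_transpose by metis
    then show ?thesis unfolding c_def .
  qed
  also have "\<dots> = (\<Sum>j\<in>UNIV. l j * (c $ j * c $ j))"
    by (simp add: diagm_mult inner_vec_def mult_ac)
  also have "\<dots> \<le> (\<Sum>j\<in>UNIV. lambda_max A * (c $ j * c $ j))"
    by (intro sum_mono mult_right_mono le) simp
  also have "\<dots> = lambda_max A * (c \<bullet> c)"
    by (simp add: inner_vec_def sum_distrib_left)
  finally show "x \<bullet> (A *v x) \<le> lambda_max A * (x \<bullet> x)" using cc by simp
qed

lemma transpose_diagm [simp]: "transpose (diagm l) = diagm l"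
  by (simp add: transpose_def diagm_def vec_eq_iff)

lemma diagm_mul: "diagm a ** diagm b = diagm (\<lambda>j. a j * b j)"
proof (rule mat_eq_columns)
  fix j
  show "column j (diagm a ** diagm b) = column j (diagm (\<lambda>j. a j * b j))"
    unfolding column_diagm by (simp add: column_def diagm_def vec_eq_iff)
qed

lemma det_diagm: "det (diagm l) = (\<Prod>j\<in>UNIV. l j)"
  by (subst det_diagonal) (auto simp: diagm_def)

lemma det_orth_sq: "orthogonal_matrix (U::real^'n^'n) \<Longrightarrow> det U * det U = 1"
  using det_orthogonal_matrix by fastforce

lemma det_spectral:
  assumes "orthogonal_matrix (U::real^'n^'n)"
  shows "det (U ** diagm l ** transpose U) = (\<Prod>j\<in>UNIV. l j)"
proof -
  have "det (U ** diagm l ** transpose U) = det U * det U * (\<Prod>j\<in>UNIV. l j)"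
    by (simp add: det_mul det_diagm)
  then show ?thesis using det_orth_sq[OF assms] by simp
qed

lemma inner_spectral:
  assumes U: "orthogonal_matrix (U::real^'n^'n)"
  shows "x \<bullet> ((U ** diagm l ** transpose U) *v x) = (\<Sum>j\<in>UNIV. l j * ((transpose U *v x) $ j)^2)"
proof -
  define c where "c = transpose U *v x"
  have "(U ** diagm l ** transpose U) *v x = U *v (diagm l *v c)" unfolding c_def
    by (simp only: matrix_vector_mul_assoc matrix_mul_assoc)
  then have "x \<bullet> ((U ** diagm l ** transpose U) *v x) = c \<bullet> (diagm l *v c)"
    unfolding c_def using inner_mat_transpose by metis
  also have "\<dots> = (\<Sum>j\<in>UNIV. l j * (c $ j)^2)"
    by (simp add: diagm_mult inner_vec_def mult_ac power2_eq_square)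
  finally show ?thesis unfolding c_def .
qed

lemma spectral_eig_pos:
  assumes pd: "pd_mat A" and U: "orthogonal_matrix U"
    and ev: "\<forall>j. A *v column j U = l j *s column j U"
  shows "l j > 0"
proof -
  have n1: "norm (column j U) = 1" using U unfolding orthogonal_matrix_orthonormal_columns by blast
  then have "column j U \<bullet> column j U = 1" by (simp add: norm_eq_1)
  moreover have "column j U \<noteq> 0" using n1 by auto
  then have "0 < column j U \<bullet> (A *v column j U)"
    using pd unfolding pd_mat_def by blast
  ultimately show ?thesis using ev by (simp add: scalar_mult_eq_scaleR)
qed

lemma spectral_eig_nonneg:
  assumes psd: "psd_mat A" and U: "orthogonal_matrix U"
    and ev: "\<forall>j. A *v column j U = l j *s column j U"
  shows "l j \<ge> 0"
proof -
  have n1: "norm (column j U) = 1" using U unfolding orthogonal_matrix_orthonormal_columns by blast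
  then have "column j U \<bullet> column j U = 1" by (simp add: norm_eq_1)
  moreover have "0 \<le> column j U \<bullet> (A *v column j U)"
    using psd unfolding psd_mat_def by blast
  ultimately show ?thesis using ev by (simp add: scalar_mult_eq_scaleR)
qed

lemma pd_det_pos:
  assumes pd: "pd_mat (A::real^'n^'n)"
  shows "det A > 0"
proof -
  have sym: "transpose A = A" using pd unfolding pd_mat_def sym_mat_def by blast
  obtain U l where U: "orthogonal_matrix U" and A: "A = U ** diagm l ** transpose U"
    and ev: "\<forall>j. A *v column j U = l j *s column j U"
    using spectral[OF sym] by blast
  have "det A = (\<Prod>j\<in>UNIV. l j)" using A det_spectral[OF U] by simp
  also have "\<dots> > 0" using spectral_eig_pos[OF pd U ev] by (simp add: prod_pos)
  finally show ?thesis .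
qed

lemma sqrt_unique_aux:
  assumes pd: "pd_mat A" and U: "orthogonal_matrix U"
    and ev: "\<forall>j. A *v column j U = l j *s column j U"
    and Q: "psd_mat Q" "Q ** Q = A"
  shows "Q = U ** diagm (\<lambda>j. sqrt (l j)) ** transpose U"
proof -
  have symQ: "transpose Q = Q" using Q(1) unfolding psd_mat_def sym_mat_def by blast
  have Qc: "Q *v column j U = sqrt (l j) *s column j U" for j
  proof -
    define u where "u = column j U"
    define s where "s = sqrt (l j)"
    have lpos: "l j > 0" by (rule spectral_eig_pos[OF pd U ev])
    then have s0: "s > 0" and ss: "s * s = l j" unfolding s_def by auto
    define w where "w = Q *v u - s *s u"
    have QQu: "Q *v (Q *v u) = l j *s u"
      using ev Q(2) unfolding u_def by (simp add: matrix_vector_mul_assoc)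
    have "Q *v w = (-s) *s w"
      unfolding w_def
      by (simp add: matrix_vector_mult_diff_distrib scalar_mult_eq_scaleR
          matrix_vector_mult_scaleR QQu ss[symmetric] algebra_simps)
    then have "w \<bullet> (Q *v w) = - s * (w \<bullet> w)" by (simp add: scalar_mult_eq_scaleR)
    moreover have "w \<bullet> (Q *v w) \<ge> 0" using Q(1) unfolding psd_mat_def by blast
    ultimately have sw: "s * (w \<bullet> w) \<le> 0" by linarith
    have "w \<bullet> w \<le> 0"
    proof (rule ccontr)
      assume "\<not> w \<bullet> w \<le> 0"
      then have "w \<bullet> w > 0" using not_le by blast
      then have "s * (w \<bullet> w) > 0" using s0 by simp
      then show False using sw by linarith
    qed
    then have "w = 0" by (metis inner_eq_zero_iff inner_ge_zero order_antisym)
    then show ?thesis unfolding w_def u_def s_def by simp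
  qed
  have "Q ** U = U ** diagm (\<lambda>j. sqrt (l j))"
    by (rule mat_eq_columns, subst column_diagm) (simp add: column_mul Qc)
  moreover have "Q = Q ** U ** transpose U" using orth_UT[OF U]
    by (metis matrix_mul_assoc matrix_mul_rid)
  ultimately show ?thesis by simp
qed

lemma mat_sqrt_props:
  assumes pd: "pd_mat (A::real^'n^'n)"
  shows "psd_mat (mat_sqrt A) \<and> mat_sqrt A ** mat_sqrt A = A"
proof -
  have sym: "transpose A = A" using pd unfolding pd_mat_def sym_mat_def by blast
  obtain U l where U: "orthogonal_matrix U" and A: "A = U ** diagm l ** transpose U"
    and ev: "\<forall>j. A *v column j U = l j *s column j U"
    using spectral[OF sym] by blast
  define P where "P = U ** diagm (\<lambda>j. sqrt (l j)) ** transpose U"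
  have lpos: "l j > 0" for j by (rule spectral_eig_pos[OF pd U ev])
  have "psd_mat P"
    unfolding psd_mat_def sym_mat_def
  proof
    show "transpose P = P" unfolding P_def by (simp add: matrix_transpose_mul matrix_mul_assoc)
    show "\<forall>x. 0 \<le> x \<bullet> (P *v x)"
    proof
      fix x
      show "0 \<le> x \<bullet> (P *v x)" unfolding P_def inner_spectral[OF U]
      proof (intro sum_nonneg mult_nonneg_nonneg)
        fix j show "0 \<le> sqrt (l j)" using lpos[of j] by simp
      qed simp
    qed
  qed
  moreover have "P ** P = A"
  proof -
    define D where "D = diagm (\<lambda>j. sqrt (l j))"
    have dd: "D ** D = diagm l"
    proof -
      have "(\<lambda>j. sqrt (l j) * sqrt (l j)) = l" using lpos by (simp add: less_imp_le fun_eq_iff)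
      then show ?thesis unfolding D_def by (simp only: diagm_mul)
    qed
    have "P ** P = U ** D ** (transpose U ** U) ** D ** transpose U"
      unfolding P_def D_def by (simp only: matrix_mul_assoc)
    also have "\<dots> = U ** (D ** D) ** transpose U"
      by (simp only: orth_TU[OF U] matrix_mul_rid matrix_mul_assoc)
    also have "\<dots> = A" unfolding dd A ..
    finally show ?thesis .
  qed
  ultimately have ex: "\<exists>!B. psd_mat B \<and> B ** B = A"
  proof (intro ex1I[of _ P])
    fix B assume "psd_mat B \<and> B ** B = A"
    then show "B = P" unfolding P_def using sqrt_unique_aux[OF pd U ev] by blast
  qed blast
  show ?thesis unfolding mat_sqrt_def by (rule theI'[OF ex])
qed

lemma mv_scaleR: "(c *\<^sub>R M) *v x = c *\<^sub>R (M *v x)" for M :: "real^'n^'m"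
  by (simp add: scaleR_matrix_vector_assoc)

lemma transpose_add: "transpose (A + B) = transpose A + transpose (B::real^'n^'m)"
  by (simp add: transpose_def vec_eq_iff)

lemma psd_add: "psd_mat A \<Longrightarrow> psd_mat B \<Longrightarrow> psd_mat (A + B)"
  unfolding psd_mat_def sym_mat_def
  by (simp add: transpose_add matrix_vector_mult_add_rdistrib inner_add_right add_nonneg_nonneg)

lemma psd_scale: "psd_mat A \<Longrightarrow> c \<ge> 0 \<Longrightarrow> psd_mat (c *\<^sub>R A)"
  unfolding psd_mat_def sym_mat_def
  by (simp add: transpose_scalar mv_scaleR)

lemma pd_scale: "pd_mat A \<Longrightarrow> c > 0 \<Longrightarrow> pd_mat (c *\<^sub>R A)"
  unfolding pd_mat_def sym_mat_def
  by (simp add: transpose_scalar mv_scaleR)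

lemma pd_psd: "pd_mat A \<Longrightarrow> psd_mat A"
  unfolding pd_mat_def psd_mat_def
  by (metis inner_zero_left less_eq_real_def)

lemma pd_add_psd: "pd_mat A \<Longrightarrow> psd_mat B \<Longrightarrow> pd_mat (A + B)"
  unfolding psd_mat_def pd_mat_def sym_mat_def
  by (simp add: transpose_add matrix_vector_mult_add_rdistrib inner_add_right add_pos_nonneg)

lemma psd_congr:
  assumes "psd_mat B"
  shows "psd_mat (transpose R ** B ** R)"
  unfolding psd_mat_def sym_mat_def
proof
  have "transpose B = B" using assms unfolding psd_mat_def sym_mat_def by blast
  then show "transpose (transpose R ** B ** R) = transpose R ** B ** R"
    by (simp add: matrix_transpose_mul matrix_mul_assoc)
  show "\<forall>x. 0 \<le> x \<bullet> ((transpose R ** B ** R) *v x)"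
  proof
    fix x
    have "x \<bullet> ((transpose R ** B ** R) *v x) = x \<bullet> (transpose R *v (B *v (R *v x)))"
      by (simp only: matrix_vector_mul_assoc matrix_mul_assoc)
    also have "\<dots> = (R *v x) \<bullet> (B *v (R *v x))"
      using inner_mat_transpose[of x "transpose R"] by (simp only: transpose_transpose)
    also have "\<dots> \<ge> 0" using assms unfolding psd_mat_def by blast
    finally show "0 \<le> x \<bullet> ((transpose R ** B ** R) *v x)" .
  qed
qed

lemma psd_det_nonneg:
  assumes psd: "psd_mat (A::real^'n^'n)"
  shows "det A \<ge> 0"
proof -
  have sym: "transpose A = A" using psd unfolding psd_mat_def sym_mat_def by blast
  obtain U l where U: "orthogonal_matrix U" and A: "A = U ** diagm l ** transpose U"
    and ev: "\<forall>j. A *v column j U = l j *s column j U"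
    using spectral[OF sym] by blast
  have "det A = (\<Prod>j\<in>UNIV. l j)" using A det_spectral[OF U] by simp
  also have "\<dots> \<ge> 0" using spectral_eig_nonneg[OF psd U ev] by (simp add: prod_nonneg)
  finally show ?thesis .
qed

lemma prod_ineq:
  fixes c :: "'n::finite \<Rightarrow> real"
  assumes c: "\<And>j. c j \<ge> 0"
  shows "(\<Prod>j\<in>UNIV. 1 + c j) powr (1 / real CARD('n)) \<ge> 1 + (\<Prod>j\<in>UNIV. c j) powr (1 / real CARD('n))"
proof -
  define p where "p = 1 / real CARD('n)"
  define G where "G = (\<Prod>j\<in>UNIV. 1 + c j) powr p"
  have P0: "(\<Prod>j\<in>UNIV. 1 + c j) > 0" using c by (simp add: prod_pos add_pos_nonneg)
  then have G0: "G > 0" unfolding G_def by (subst powr_gt_zero) linarith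
  have am1: "(\<Prod>j\<in>UNIV. 1 / (1 + c j)) powr p \<le> (\<Sum>j\<in>UNIV. (1 / (1 + c j)) / CARD('n))"
    unfolding p_def using arith_geom_mean[of "UNIV::'n set" "\<lambda>j. 1 / (1 + c j)"] c
    by (simp add: add_nonneg_nonneg)
  have am2: "(\<Prod>j\<in>UNIV. c j / (1 + c j)) powr p \<le> (\<Sum>j\<in>UNIV. (c j / (1 + c j)) / CARD('n))"
    unfolding p_def using arith_geom_mean[of "UNIV::'n set" "\<lambda>j. c j / (1 + c j)"] c
    by (simp add: add_nonneg_nonneg)
  have e1: "(\<Prod>j\<in>UNIV. 1 / (1 + c j)) powr p = 1 / G"
    unfolding G_def by (simp add: prod_dividef powr_divide)
  have e2: "(\<Prod>j\<in>UNIV. c j / (1 + c j)) powr p = (\<Prod>j\<in>UNIV. c j) powr p / G"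
    unfolding G_def by (simp add: prod_dividef powr_divide)
  have pt: "1 / (1 + c j) + c j / (1 + c j) = 1" for j
  proof -
    have "1 + c j > 0" using c[of j] by simp
    then show ?thesis by (simp add: field_simps)
  qed
  have "(\<Sum>j\<in>UNIV. (1 / (1 + c j)) / CARD('n)) + (\<Sum>j\<in>UNIV. (c j / (1 + c j)) / CARD('n))
      = (\<Sum>j\<in>UNIV. ((1 / (1 + c j)) + (c j / (1 + c j))) / CARD('n))"
    by (simp add: sum.distrib[symmetric] add_divide_distrib)
  also have "\<dots> = (\<Sum>(j::'n)\<in>UNIV. 1 / CARD('n))" by (simp only: pt)
  also have "\<dots> = 1" by simp
  finally have "1 / G + (\<Prod>j\<in>UNIV. c j) powr p / G \<le> 1"
    using am1 am2 e1 e2 by linarith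
  then have "(1 + (\<Prod>j\<in>UNIV. c j) powr p) / G \<le> 1" by (simp add: add_divide_distrib)
  then have "1 + (\<Prod>j\<in>UNIV. c j) powr p \<le> G" using G0 by (simp add: divide_le_eq)
  then show ?thesis unfolding G_def p_def .
qed

lemma matrix_add_rdistrib: "((A + B) ** C) = (A ** C) + (B ** (C::real^'p^'n))"
  for A B :: "real^'n^'m"
  by (simp add: matrix_matrix_mult_def vec_eq_iff sum.distrib[symmetric] distrib_right)

lemma matrix_diff_rdistrib: "((A - B) ** C) = (A ** C) - (B ** (C::real^'p^'n))"
  for A B :: "real^'n^'m"
  by (simp add: matrix_matrix_mult_def vec_eq_iff sum_subtractf[symmetric] left_diff_distrib)

lemma matrix_diff_ldistrib: "(C ** (A - B)) = (C ** A) - (C ** (B::real^'p^'n))"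
  for C :: "real^'n^'m"
  by (simp add: matrix_matrix_mult_def vec_eq_iff sum_subtractf[symmetric] right_diff_distrib)

lemma diagm_one: "diagm (\<lambda>j. 1) = mat 1"
  by (simp add: diagm_def mat_def vec_eq_iff)

lemma diagm_add: "diagm (\<lambda>j. a j + b j) = diagm a + diagm b"
  by (simp add: diagm_def vec_eq_iff)

lemma mink_core:
  assumes psd: "psd_mat (C::real^'n^'n)"
  shows "det (mat 1 + C) powr (1 / real CARD('n)) \<ge> 1 + det C powr (1 / real CARD('n))"
proof -
  have sym: "transpose C = C" using psd unfolding psd_mat_def sym_mat_def by blast
  obtain V c where V: "orthogonal_matrix V" and C: "C = V ** diagm c ** transpose V"
    and ev: "\<forall>j. C *v column j V = c j *s column j V"
    using spectral[OF sym] by blast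
  have c0: "c j \<ge> 0" for j by (rule spectral_eig_nonneg[OF psd V ev])
  have "V ** diagm (\<lambda>j. 1 + c j) ** transpose V = V ** diagm (\<lambda>j. 1) ** transpose V + C"
    unfolding C diagm_add by (simp add: matrix_add_ldistrib matrix_add_rdistrib)
  also have "\<dots> = mat 1 + C" unfolding diagm_one using orth_UT[OF V] by simp
  finally have IC: "mat 1 + C = V ** diagm (\<lambda>j. 1 + c j) ** transpose V" by simp
  have "det (mat 1 + C) = (\<Prod>j\<in>UNIV. 1 + c j)" unfolding IC by (rule det_spectral[OF V])
  moreover have "det C = (\<Prod>j\<in>UNIV. c j)" unfolding C by (rule det_spectral[OF V])
  ultimately show ?thesis using prod_ineq[of c] c0 by simp
qed

lemma minkowski:
  assumes pd: "pd_mat (A::real^'n^'n)" and psd: "psd_mat B"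
  shows "det (A + B) powr (1 / real CARD('n)) \<ge> det A powr (1 / real CARD('n)) + det B powr (1 / real CARD('n))"
proof -
  define p where "p = 1 / real CARD('n)"
  have sym: "transpose A = A" using pd unfolding pd_mat_def sym_mat_def by blast
  obtain U l where U: "orthogonal_matrix U" and A: "A = U ** diagm l ** transpose U"
    and ev: "\<forall>j. A *v column j U = l j *s column j U"
    using spectral[OF sym] by blast
  have lpos: "l j > 0" for j by (rule spectral_eig_pos[OF pd U ev])
  define s where "s j = sqrt (l j)" for j
  define R where "R = U ** diagm s"
  define Ri where "Ri = diagm (\<lambda>j. 1 / s j) ** transpose U"
  have "Ri ** R = diagm (\<lambda>j. 1 / s j) ** (transpose U ** U) ** diagm s"
    unfolding R_def Ri_def by (simp only: matrix_mul_assoc)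
  also have "\<dots> = diagm (\<lambda>j. 1 / s j * s j)"
    by (simp only: orth_TU[OF U] matrix_mul_rid diagm_mul)
  also have "(\<lambda>j. 1 / s j * s j) = (\<lambda>j. 1)"
  proof -
    have "\<forall>x. l x \<noteq> 0" using lpos by (metis less_irrefl)
    then show ?thesis unfolding s_def by (simp add: fun_eq_iff)
  qed
  finally have RiR: "Ri ** R = mat 1" by (simp add: diagm_one)
  then have RRi: "R ** Ri = mat 1" using matrix_left_right_inverse by blast
  have "R ** transpose R = U ** (diagm s ** diagm s) ** transpose U"
    unfolding R_def by (simp add: matrix_transpose_mul matrix_mul_assoc)
  also have "diagm s ** diagm s = diagm l" unfolding diagm_mul s_def using lpos
    by (simp add: less_imp_le)
  finally have ARR: "A = R ** transpose R" using A by simp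
  define C where "C = Ri ** B ** transpose Ri"
  have psdC: "psd_mat C" unfolding C_def using psd_congr[OF psd, of "transpose Ri"] by simp
  have "R ** C ** transpose R = (R ** Ri) ** B ** (transpose Ri ** transpose R)"
    unfolding C_def by (simp only: matrix_mul_assoc)
  also have "transpose Ri ** transpose R = mat 1"
    using RRi by (metis matrix_transpose_mul transpose_mat)
  finally have BRC: "B = R ** C ** transpose R" using RRi by simp
  have ABR: "A + B = R ** (mat 1 + C) ** transpose R"
    unfolding ARR BRC by (simp add: matrix_add_ldistrib matrix_add_rdistrib)
  define r where "r = det R * det R"
  have dA: "det A = r" unfolding ARR r_def by (simp add: det_mul)
  have dB: "det B = r * det C" unfolding BRC r_def by (simp add: det_mul)
  have dAB: "det (A + B) = r * det (mat 1 + C)" unfolding ABR r_def by (simp add: det_mul)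
  have r0: "r > 0" using pd_det_pos[OF pd] dA by simp
  have "det (A + B) powr p = r powr p * det (mat 1 + C) powr p" unfolding dAB by (simp add: powr_mult)
  also have "\<dots> \<ge> r powr p * (1 + det C powr p)"
    using mink_core[OF psdC] unfolding p_def by (intro mult_left_mono) auto
  finally have "det (A + B) powr p \<ge> r powr p + (r * det C) powr p"
    by (simp add: powr_mult distrib_left)
  then show ?thesis unfolding dA dB p_def .
qed

lemma det_scale: "det (c *\<^sub>R (A::real^'n^'n)) = c ^ CARD('n) * det A"
proof -
  have "c *\<^sub>R A = (c *\<^sub>R mat 1) ** A" by (metis scalar_matrix_assoc matrix_mul_lid)
  moreover have "det (c *\<^sub>R (mat 1::real^'n^'n)) = c ^ CARD('n)"
    by (subst det_diagonal) (auto simp: mat_def)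
  ultimately show ?thesis by (simp add: det_mul)
qed

lemma powr_scale:
  assumes "(c::real) \<ge> 0"
  shows "(c ^ CARD('n::finite) * x) powr (1 / real CARD('n)) = c * x powr (1 / real CARD('n))"
proof (cases "c = 0")
  case True then show ?thesis by simp
next
  case False
  then have c0: "c > 0" using assms by simp
  have "(c ^ CARD('n)) powr (1 / real CARD('n)) = c"
    using c0 by (simp add: powr_realpow[symmetric] powr_powr)
  then show ?thesis by (simp add: powr_mult)
qed

lemma det_concave:
  fixes D1 D2 :: "real^'n^'n"
  assumes pd1: "pd_mat D1" and pd2: "pd_mat D2" and u: "u \<ge> 0" and v: "v \<ge> 0" and uv: "u + v = 1"
  shows "det (u *\<^sub>R D1 + v *\<^sub>R D2) powr (1 / real CARD('n))
           \<ge> u * det D1 powr (1 / real CARD('n)) + v * det D2 powr (1 / real CARD('n))"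
proof (cases "u = 0")
  case True
  then show ?thesis using uv by simp
next
  case False
  then have "u > 0" using u by simp
  then have "pd_mat (u *\<^sub>R D1)" by (rule pd_scale[OF pd1])
  moreover have "psd_mat (v *\<^sub>R D2)" by (rule psd_scale[OF pd_psd[OF pd2] v])
  ultimately have m: "det (u *\<^sub>R D1 + v *\<^sub>R D2) powr (1 / real CARD('n))
      \<ge> det (u *\<^sub>R D1) powr (1 / real CARD('n)) + det (v *\<^sub>R D2) powr (1 / real CARD('n))"
    by (rule minkowski)
  have "det (u *\<^sub>R D1) powr (1 / real CARD('n)) = u * det D1 powr (1 / real CARD('n))"
    unfolding det_scale by (rule powr_scale[OF u])
  moreover have "det (v *\<^sub>R D2) powr (1 / real CARD('n)) = v * det D2 powr (1 / real CARD('n))"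
    unfolding det_scale by (rule powr_scale[OF v])
  ultimately show ?thesis using m by simp
qed

lemma real_bound_aux: "\<bar>(x - a) * (y - b)\<bar> \<le> 2 * x^2 + 2 * a^2 + 2 * y^2 + 2 * (b::real)^2"
proof -
  define p where "p = x - a"
  define q where "q = y - b"
  have "0 \<le> (\<bar>p\<bar> - \<bar>q\<bar>)^2" by simp
  then have "2 * \<bar>p\<bar> * \<bar>q\<bar> \<le> p^2 + q^2" by (simp add: power2_eq_square algebra_simps)
  moreover have "0 \<le> \<bar>p\<bar> * \<bar>q\<bar>" by simp
  ultimately have "\<bar>p\<bar> * \<bar>q\<bar> \<le> p^2 + q^2" by linarith
  then have 1: "\<bar>p * q\<bar> \<le> p^2 + q^2" by (simp add: abs_mult)
  have "0 \<le> (x + a)^2" by simp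
  then have 2: "p^2 \<le> 2 * x^2 + 2 * a^2" unfolding p_def by (simp add: power2_eq_square algebra_simps)
  have "0 \<le> (y + b)^2" by simp
  then have 3: "q^2 \<le> 2 * y^2 + 2 * b^2" unfolding q_def by (simp add: power2_eq_square algebra_simps)
  show ?thesis using 1 2 3 unfolding p_def q_def by linarith
qed

lemma int_prod:
  assumes fm: "finite_measure M" and mf: "f \<in> borel_measurable M" and mg: "g \<in> borel_measurable M"
    and if2: "integrable M (\<lambda>w. (f w)^2)" and ig2: "integrable M (\<lambda>w. (g w)^2)"
  shows "integrable M (\<lambda>w. (f w - a) * (g w - (b::real)))"
proof (rule Bochner_Integration.integrable_bound[where f="\<lambda>w. 2 * (f w)^2 + 2 * a^2 + 2 * (g w)^2 + 2 * b^2"])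
  show "integrable M (\<lambda>w. 2 * (f w)^2 + 2 * a^2 + 2 * (g w)^2 + 2 * b^2)"
    using if2 ig2 finite_measure.integrable_const[OF fm]
    by (intro Bochner_Integration.integrable_add Bochner_Integration.integrable_mult_right) auto
  show "(\<lambda>w. (f w - a) * (g w - b)) \<in> borel_measurable M"
    using mf mg by (intro borel_measurable_times borel_measurable_diff) auto
  show "AE w in M. norm ((f w - a) * (g w - b)) \<le> norm (2 * (f w)^2 + 2 * a^2 + 2 * (g w)^2 + 2 * b^2)"
  proof (rule AE_I2)
    fix w
    have "0 \<le> 2 * (f w)^2 + 2 * a^2 + 2 * (g w)^2 + 2 * b^2" by simp
    then show "norm ((f w - a) * (g w - b)) \<le> norm (2 * (f w)^2 + 2 * a^2 + 2 * (g w)^2 + 2 * b^2)"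
      using real_bound_aux[of "f w" a "g w" b] by simp
  qed
qed

lemma E_lin:
  fixes Y :: "'w \<Rightarrow> real^'n^'n" and P :: "real^'n^'m" and Q :: "real^'p^'n"
  assumes iY: "\<And>j k. integrable M (\<lambda>w. Y w $ j $ k)"
  shows "mat_expect M (\<lambda>w. P ** Y w ** Q) = P ** mat_expect M Y ** Q"
  unfolding mat_expect_def
  by (simp add: vec_eq_iff matrix_matrix_mult_def sum_distrib_right integral_sum iY
       integrable_sum integrable_mult_right integrable_mult_left)

lemma E_add:
  fixes Y Z :: "'w \<Rightarrow> real^'n^'m"
  assumes iY: "\<And>j k. integrable M (\<lambda>w. Y w $ j $ k)" and iZ: "\<And>j k. integrable M (\<lambda>w. Z w $ j $ k)"
  shows "mat_expect M (\<lambda>w. Y w + Z w) = mat_expect M Y + mat_expect M Z"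
  unfolding mat_expect_def by (simp add: vec_eq_iff iY iZ)

lemma E_scale:
  fixes Y :: "'w \<Rightarrow> real^'n^'m"
  shows "mat_expect M (\<lambda>w. c *\<^sub>R Y w) = c *\<^sub>R mat_expect M Y"
  unfolding mat_expect_def by (simp add: vec_eq_iff)

lemma E_quad:
  fixes Y :: "'w \<Rightarrow> real^'n^'n"
  assumes iY: "\<And>j k. integrable M (\<lambda>w. Y w $ j $ k)"
  shows "x \<bullet> (mat_expect M Y *v x) = (\<integral>w. x \<bullet> (Y w *v x) \<partial>M)"
  unfolding mat_expect_def
  by (simp add: inner_vec_def matrix_vector_mult_def sum_distrib_left integral_sum iY
       integrable_sum integrable_mult_right integrable_mult_left mult_ac)

lemma E_sym:
  fixes Y :: "'w \<Rightarrow> real^'n^'n"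
  assumes "\<And>w. w \<in> space M \<Longrightarrow> transpose (Y w) = Y w"
  shows "transpose (mat_expect M Y) = mat_expect M Y"
proof -
  have eq: "Y w $ j $ k = Y w $ k $ j" if "w \<in> space M" for w j k
    using assms[OF that] by (metis transpose_def vec_lambda_beta)
  have "(\<integral>w. Y w $ ia $ i \<partial>M) = (\<integral>w. Y w $ i $ ia \<partial>M)" for i ia
    by (rule Bochner_Integration.integral_cong[OF refl]) (rule eq)
  then have "\<forall>i ia. (\<integral>w. Y w $ ia $ i \<partial>M) = (\<integral>w. Y w $ i $ ia \<partial>M)" by blast
  then show ?thesis unfolding mat_expect_def transpose_def
    by (simp add: vec_eq_iff)
qed

lemma E_psd:
  fixes Y :: "'w \<Rightarrow> real^'n^'n"
  assumes iY: "\<And>j k. integrable M (\<lambda>w. Y w $ j $ k)" and ps: "\<And>w. w \<in> space M \<Longrightarrow> psd_mat (Y w)"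
  shows "psd_mat (mat_expect M Y)"
  unfolding psd_mat_def sym_mat_def
proof
  show "transpose (mat_expect M Y) = mat_expect M Y"
    using ps unfolding psd_mat_def sym_mat_def by (intro E_sym) blast
  show "\<forall>x. 0 \<le> x \<bullet> (mat_expect M Y *v x)"
  proof
    fix x
    show "0 \<le> x \<bullet> (mat_expect M Y *v x)" unfolding E_quad[OF iY]
      by (rule integral_nonneg_AE, rule AE_I2) (use ps in \<open>auto simp: psd_mat_def\<close>)
  qed
qed

definition Gm :: "('w \<Rightarrow> real^'n^'n) \<Rightarrow> real^'n^'n \<Rightarrow> 'w \<Rightarrow> real^'n^'n" where
  "Gm T X w = (T w - mat 1) ** X ** (T w - mat 1)"

definition Phi :: "'w measure \<Rightarrow> ('w \<Rightarrow> real^'n^'n) \<Rightarrow> real^'n^'n \<Rightarrow> real^'n^'n \<Rightarrow> real^'n^'n" where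
  "Phi M T P X = P ** mat_expect M (Gm T X) ** P"

lemma transpose_diff: "transpose (A - B) = transpose A - transpose (B::real^'n^'m)"
  by (simp add: transpose_def vec_eq_iff)

lemma int_G:
  assumes fm: "finite_measure M"
    and meas: "\<And>j k. (\<lambda>w. T w $ j $ k) \<in> borel_measurable M"
    and sq: "\<And>j k. integrable M (\<lambda>w. (T w $ j $ k)^2)"
  shows "integrable M (\<lambda>w. Gm T X w $ j $ k)"
proof -
  have e: "(\<lambda>w. Gm T X w $ j $ k) = (\<lambda>w. \<Sum>b\<in>UNIV. \<Sum>a\<in>UNIV. X $ a $ b *
      ((T w $ j $ a - mat 1 $ j $ a) * (T w $ b $ k - mat 1 $ b $ k)))"
    by (simp add: Gm_def matrix_matrix_mult_def sum_distrib_right sum_distrib_left mult_ac fun_eq_iff)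
  show ?thesis unfolding e
    by (intro Bochner_Integration.integrable_sum Bochner_Integration.integrable_mult_right
        int_prod[OF fm] meas sq)
qed

lemma Phi_E:
  assumes fm: "finite_measure M"
    and meas: "\<And>j k. (\<lambda>w. T w $ j $ k) \<in> borel_measurable M"
    and sq: "\<And>j k. integrable M (\<lambda>w. (T w $ j $ k)^2)"
  shows "mat_expect M (\<lambda>w. P ** (T w - mat 1) ** D ** L ** D ** (T w - mat 1) ** P) = Phi M T P (D ** L ** D)"
proof -
  have "(\<lambda>w. P ** (T w - mat 1) ** D ** L ** D ** (T w - mat 1) ** P) = (\<lambda>w. P ** Gm T (D ** L ** D) w ** P)"
    unfolding Gm_def by (simp only: matrix_mul_assoc)
  then show ?thesis unfolding Phi_def using E_lin[OF int_G[OF fm meas sq]] by simp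
qed

lemma Phi_add:
  assumes fm: "finite_measure M"
    and meas: "\<And>j k. (\<lambda>w. T w $ j $ k) \<in> borel_measurable M"
    and sq: "\<And>j k. integrable M (\<lambda>w. (T w $ j $ k)^2)"
  shows "Phi M T P (X + Y) = Phi M T P X + Phi M T P Y"
proof -
  have "Gm T (X + Y) = (\<lambda>w. Gm T X w + Gm T Y w)"
    unfolding Gm_def by (simp add: fun_eq_iff matrix_add_ldistrib matrix_add_rdistrib)
  then show ?thesis unfolding Phi_def
    using E_add[OF int_G[OF fm meas sq] int_G[OF fm meas sq]]
    by (simp add: matrix_add_ldistrib matrix_add_rdistrib)
qed

lemma Phi_scale: "Phi M T P (c *\<^sub>R X) = c *\<^sub>R Phi M T P X"
proof -
  have "Gm T (c *\<^sub>R X) = (\<lambda>w. c *\<^sub>R Gm T X w)"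
    unfolding Gm_def by (simp add: fun_eq_iff matrix_scalar_ac scalar_matrix_assoc)
  then show ?thesis unfolding Phi_def
    by (simp add: E_scale matrix_scalar_ac scalar_matrix_assoc)
qed

lemma Phi_diff:
  assumes fm: "finite_measure M"
    and meas: "\<And>j k. (\<lambda>w. T w $ j $ k) \<in> borel_measurable M"
    and sq: "\<And>j k. integrable M (\<lambda>w. (T w $ j $ k)^2)"
  shows "Phi M T P (X - Y) = Phi M T P X - Phi M T P Y"
  using Phi_add[OF fm meas sq, of P "X - Y" Y] by simp

lemma Phi_psd:
  assumes fm: "finite_measure M"
    and meas: "\<And>j k. (\<lambda>w. T w $ j $ k) \<in> borel_measurable M"
    and sq: "\<And>j k. integrable M (\<lambda>w. (T w $ j $ k)^2)"
    and symT: "\<And>w. w \<in> space M \<Longrightarrow> transpose (T w) = T w"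
    and P: "transpose P = P" and X: "psd_mat X"
  shows "psd_mat (Phi M T P X)"
proof -
  have "psd_mat (Gm T X w)" if "w \<in> space M" for w
  proof -
    have "transpose (T w - mat 1) = T w - mat 1" using symT[OF that] by (simp add: transpose_diff)
    then show ?thesis unfolding Gm_def using psd_congr[OF X, of "T w - mat 1"] by simp
  qed
  then have "psd_mat (mat_expect M (Gm T X))" by (intro E_psd int_G[OF fm meas sq])
  then show ?thesis unfolding Phi_def using psd_congr[of _ P] P by metis
qed

lemma lmax_nonneg:
  assumes "psd_mat C"
  shows "lambda_max C \<ge> 0"
proof -
  have sym: "transpose C = C" using assms unfolding psd_mat_def sym_mat_def by blast
  obtain z where z: "z \<noteq> 0" "C *v z = lambda_max C *s z" using lambda_max_props(1)[OF sym] by blast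
  have "z \<bullet> (C *v z) \<ge> 0" using assms unfolding psd_mat_def by blast
  then have "lambda_max C * (z \<bullet> z) \<ge> 0" using z(2) by (simp add: scalar_mult_eq_scaleR)
  moreover have "z \<bullet> z > 0" using z(1) by simp
  ultimately show ?thesis by (simp add: zero_le_mult_iff)
qed

lemma lmax_convex:
  fixes C1 C2 B :: "real^'n^'n"
  assumes s1: "transpose C1 = C1" and s2: "transpose C2 = C2" and B: "psd_mat B"
    and u: "u \<ge> 0" and v: "v \<ge> 0"
  shows "lambda_max (u *\<^sub>R C1 + v *\<^sub>R C2 - (u * v) *\<^sub>R B) \<le> u * lambda_max C1 + v * lambda_max C2"
proof -
  define C where "C = u *\<^sub>R C1 + v *\<^sub>R C2 - (u * v) *\<^sub>R B"
  have sB: "transpose B = B" using B unfolding psd_mat_def sym_mat_def by blast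
  have sym: "transpose C = C" unfolding C_def
    by (simp add: transpose_diff transpose_add transpose_scalar s1 s2 sB)
  obtain z where z: "z \<noteq> 0" "C *v z = lambda_max C *s z" using lambda_max_props(1)[OF sym] by blast
  have "lambda_max C * (z \<bullet> z) = z \<bullet> (C *v z)" using z(2) by (simp add: scalar_mult_eq_scaleR)
  also have "\<dots> = u * (z \<bullet> (C1 *v z)) + v * (z \<bullet> (C2 *v z)) - (u * v) * (z \<bullet> (B *v z))"
    unfolding C_def by (simp add: matrix_vector_mult_add_rdistrib matrix_vector_mult_diff_rdistrib
       mv_scaleR inner_add_right inner_diff_right)
  also have "\<dots> \<le> u * (lambda_max C1 * (z \<bullet> z)) + v * (lambda_max C2 * (z \<bullet> z)) - 0"
  proof -
    have "u * (z \<bullet> (C1 *v z)) \<le> u * (lambda_max C1 * (z \<bullet> z))"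
      using lambda_max_props(2)[OF s1] u by (intro mult_left_mono) auto
    moreover have "v * (z \<bullet> (C2 *v z)) \<le> v * (lambda_max C2 * (z \<bullet> z))"
      using lambda_max_props(2)[OF s2] v by (intro mult_left_mono) auto
    moreover have "0 \<le> (u * v) * (z \<bullet> (B *v z))"
      using B u v unfolding psd_mat_def by (intro mult_nonneg_nonneg) auto
    ultimately show ?thesis by linarith
  qed
  also have "\<dots> = (u * lambda_max C1 + v * lambda_max C2) * (z \<bullet> z)" by (simp add: algebra_simps)
  finally have "lambda_max C * (z \<bullet> z) \<le> (u * lambda_max C1 + v * lambda_max C2) * (z \<bullet> z)" .
  moreover have "z \<bullet> z > 0" using z(1) by simp
  ultimately show ?thesis unfolding C_def by (simp add: mult_le_cancel_right)
qed

lemma DLD_identity: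
  fixes D1 D2 L :: "real^'n^'n"
  assumes "u + v = 1"
  shows "(u *\<^sub>R D1 + v *\<^sub>R D2) ** L ** (u *\<^sub>R D1 + v *\<^sub>R D2)
     = u *\<^sub>R (D1 ** L ** D1) + v *\<^sub>R (D2 ** L ** D2) - (u * v) *\<^sub>R ((D1 - D2) ** L ** (D1 - D2))"
proof -
  have v: "v = 1 - u" using assms by simp
  show ?thesis unfolding v
    by (simp add: matrix_add_ldistrib matrix_add_rdistrib matrix_diff_ldistrib matrix_diff_rdistrib
        matrix_scalar_ac scalar_matrix_assoc[symmetric] algebra_simps)
qed

theorem proposition3:
  fixes M :: "'w measure" and S :: "nat \<Rightarrow> 'w \<Rightarrow> real^'d^'d"
    and L :: "real^'d^'d" and Ls :: "nat \<Rightarrow> real^'d^'d"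
    and n K :: nat and eps Dinf c :: real
  assumes "prob_space M"
    and "n \<ge> 1" and "K \<ge> 1" and "eps > 0" and "c \<ge> 0"
    and "pd_mat L"
    and "\<forall>i\<in>{1..n}. pd_mat (Ls i)"
    and "\<forall>i\<in>{1..n}. \<forall>w\<in>space M. psd_mat (S i w)"
    and "\<forall>i\<in>{1..n}. \<forall>j k. (\<lambda>w. S i w $ j $ k) \<in> borel_measurable M"
    and "\<forall>i\<in>{1..n}. \<forall>j k. integrable M (\<lambda>w. (S i w $ j $ k)^2)"
    and "\<forall>i\<in>{1..n}. mat_expect M (S i) = mat 1"
  shows "convex {D. pd_mat D \<and> loewner_le (D ** L ** D) D
            \<and> lambda_D M L Ls S n D \<le> real n / real K
            \<and> 4 * Dinf * lambda_D M L Ls S n D \<le> real n * eps^2 * det D powr (1 / real CARD('d))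
            \<and> real K \<ge> 12 * c / (det D powr (1 / real CARD('d)) * eps^2)}"
proof -
  note prob = assms(1) and n1 = assms(2) and K1 = assms(3) and eps = assms(4) and c0 = assms(5)
    and pdL = assms(6) and pdLs = assms(7) and psdS = assms(8) and measS = assms(9) and sqS = assms(10)
  have fm: "finite_measure M" using prob unfolding prob_space_def by blast
  define g where "g D = det D powr (1 / real CARD('d))" for D :: "real^'d^'d"
  define P where "P i = mat_sqrt (Ls i)" for i
  define A where "A i D = Phi M (S i) (P i) (D ** L ** D)" for i D
  have meas: "\<And>j k. (\<lambda>w. S i w $ j $ k) \<in> borel_measurable M" if "i \<in> {1..n}" for i
    using measS that by blast
  have sq: "\<And>j k. integrable M (\<lambda>w. (S i w $ j $ k)^2)" if "i \<in> {1..n}" for i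
    using sqS that by blast
  have symS: "\<And>w. w \<in> space M \<Longrightarrow> transpose (S i w) = S i w" if "i \<in> {1..n}" for i
    using psdS that unfolding psd_mat_def sym_mat_def by blast
  have symP: "transpose (P i) = P i" if "i \<in> {1..n}" for i
    using mat_sqrt_props[of "Ls i"] pdLs that unfolding P_def psd_mat_def sym_mat_def by blast
  have lamD: "lambda_D M L Ls S n D = Max ((\<lambda>i. lambda_max (A i D)) ` {1..n})" for D
  proof -
    have "mat_expect M (\<lambda>w. mat_sqrt (Ls i) ** (S i w - mat 1) ** D ** L ** D ** (S i w - mat 1) ** mat_sqrt (Ls i))
        = A i D" if "i \<in> {1..n}" for i
      unfolding A_def P_def by (rule Phi_E[OF fm meas[OF that] sq[OF that]])
    then have "(\<lambda>i. lambda_max (mat_expect M (\<lambda>w. mat_sqrt (Ls i) ** (S i w - mat 1) ** D ** L ** D ** (S i w - mat 1) ** mat_sqrt (Ls i)))) ` {1..n}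
        = (\<lambda>i. lambda_max (A i D)) ` {1..n}"
      by (intro image_cong refl) simp
    then show ?thesis unfolding lambda_D_def by simp
  qed
  have symL: "transpose L = L" using pdL unfolding pd_mat_def sym_mat_def by blast
  have psdL: "psd_mat L" using pdL by (rule pd_psd)
  have psdDLD: "psd_mat (D ** L ** D)" if "transpose D = D" for D
    using psd_congr[OF psdL, of D] that by simp
  have psdA: "psd_mat (A i D)" if "i \<in> {1..n}" "transpose D = D" for i D
    unfolding A_def by (rule Phi_psd[OF fm meas[OF that(1)] sq[OF that(1)] symS[OF that(1)] symP[OF that(1)] psdDLD[OF that(2)]])
  have symA: "transpose (A i D) = A i D" if "i \<in> {1..n}" "transpose D = D" for i D
    using psdA[OF that] unfolding psd_mat_def sym_mat_def by blast
  have fin: "finite ((\<lambda>i. lambda_max (A i D)) ` {1..n})" for D by simp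
  have ne: "(\<lambda>i. lambda_max (A i D)) ` {1..n} \<noteq> {}" for D using n1 by auto
  have lam_ge: "lambda_max (A i D) \<le> lambda_D M L Ls S n D" if "i \<in> {1..n}" for i D
    unfolding lamD using fin that by (intro Max_ge) auto
  have lam_nonneg: "lambda_D M L Ls S n D \<ge> 0" if "transpose D = D" for D
  proof -
    have "1 \<in> {1..n}" using n1 by simp
    then show ?thesis using lam_ge[of 1 D] lmax_nonneg[OF psdA[OF _ that]] by fastforce
  qed
  show ?thesis
  proof (rule convexI)
    fix D1 D2 :: "real^'d^'d" and u v :: real
    assume D1: "D1 \<in> {D. pd_mat D \<and> loewner_le (D ** L ** D) D
            \<and> lambda_D M L Ls S n D \<le> real n / real K
            \<and> 4 * Dinf * lambda_D M L Ls S n D \<le> real n * eps^2 * det D powr (1 / real CARD('d))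
            \<and> real K \<ge> 12 * c / (det D powr (1 / real CARD('d)) * eps^2)}"
      and D2: "D2 \<in> {D. pd_mat D \<and> loewner_le (D ** L ** D) D
            \<and> lambda_D M L Ls S n D \<le> real n / real K
            \<and> 4 * Dinf * lambda_D M L Ls S n D \<le> real n * eps^2 * det D powr (1 / real CARD('d))
            \<and> real K \<ge> 12 * c / (det D powr (1 / real CARD('d)) * eps^2)}"
      and u: "0 \<le> u" and v: "0 \<le> v" and uv: "u + v = 1"
    define D where "D = u *\<^sub>R D1 + v *\<^sub>R D2"
    from D1 have pd1: "pd_mat D1" and le1: "loewner_le (D1 ** L ** D1) D1"
      and l1: "lambda_D M L Ls S n D1 \<le> real n / real K"
      and f1: "4 * Dinf * lambda_D M L Ls S n D1 \<le> real n * eps^2 * g D1"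
      and k1: "real K \<ge> 12 * c / (g D1 * eps^2)" unfolding g_def by auto
    from D2 have pd2: "pd_mat D2" and le2: "loewner_le (D2 ** L ** D2) D2"
      and l2: "lambda_D M L Ls S n D2 \<le> real n / real K"
      and f2: "4 * Dinf * lambda_D M L Ls S n D2 \<le> real n * eps^2 * g D2"
      and k2: "real K \<ge> 12 * c / (g D2 * eps^2)" unfolding g_def by auto
    have s1: "transpose D1 = D1" using pd1 unfolding pd_mat_def sym_mat_def by blast
    have s2: "transpose D2 = D2" using pd2 unfolding pd_mat_def sym_mat_def by blast
    have sD: "transpose D = D" unfolding D_def by (simp add: transpose_add transpose_scalar s1 s2)
    define Q where "Q = (D1 - D2) ** L ** (D1 - D2)"
    have psdQ: "psd_mat Q" unfolding Q_def using psdDLD[of "D1 - D2"] by (simp add: transpose_diff s1 s2)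
    have DLD: "D ** L ** D = u *\<^sub>R (D1 ** L ** D1) + v *\<^sub>R (D2 ** L ** D2) - (u * v) *\<^sub>R Q"
      unfolding D_def Q_def by (rule DLD_identity[OF uv])
    have pdD: "pd_mat D"
    proof (cases "u = 0")
      case True
      then have "D = D2" unfolding D_def using uv by simp
      then show ?thesis using pd2 by simp
    next
      case False
      then have "u > 0" using u by simp
      then show ?thesis unfolding D_def
        by (intro pd_add_psd pd_scale[OF pd1] psd_scale[OF pd_psd[OF pd2] v])
    qed
    have "D - D ** L ** D = u *\<^sub>R (D1 - D1 ** L ** D1) + v *\<^sub>R (D2 - D2 ** L ** D2) + (u * v) *\<^sub>R Q"
      unfolding DLD unfolding D_def by (simp add: algebra_simps)
    moreover have "psd_mat (D1 - D1 ** L ** D1)" using le1 unfolding loewner_le_def .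
    moreover have "psd_mat (D2 - D2 ** L ** D2)" using le2 unfolding loewner_le_def .
    ultimately have leD: "loewner_le (D ** L ** D) D" unfolding loewner_le_def
      using psdQ u v by (simp add: psd_add psd_scale)
    have lamconv: "lambda_D M L Ls S n D \<le> u * lambda_D M L Ls S n D1 + v * lambda_D M L Ls S n D2"
      unfolding lamD[of D]
    proof (rule Max.boundedI[OF fin ne])
      fix y assume "y \<in> (\<lambda>i. lambda_max (A i D)) ` {1..n}"
      then obtain i where i: "i \<in> {1..n}" and y: "y = lambda_max (A i D)" by blast
      have "A i D = u *\<^sub>R A i D1 + v *\<^sub>R A i D2 - (u * v) *\<^sub>R Phi M (S i) (P i) Q"
        unfolding A_def DLD
        by (simp add: Phi_diff[OF fm meas[OF i] sq[OF i]] Phi_add[OF fm meas[OF i] sq[OF i]] Phi_scale)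
      moreover have "psd_mat (Phi M (S i) (P i) Q)"
        by (rule Phi_psd[OF fm meas[OF i] sq[OF i] symS[OF i] symP[OF i] psdQ])
      ultimately have "y \<le> u * lambda_max (A i D1) + v * lambda_max (A i D2)"
        unfolding y using lmax_convex[OF symA[OF i s1] symA[OF i s2] _ u v] by simp
      also have "\<dots> \<le> u * lambda_D M L Ls S n D1 + v * lambda_D M L Ls S n D2"
        using lam_ge[OF i, of D1] lam_ge[OF i, of D2] u v
        by (intro add_mono mult_left_mono) auto
      finally show "y \<le> u * lambda_D M L Ls S n D1 + v * lambda_D M L Ls S n D2" .
    qed
    have lD: "lambda_D M L Ls S n D \<le> real n / real K"
    proof -
      have "u * lambda_D M L Ls S n D1 + v * lambda_D M L Ls S n D2 \<le> u * (real n / real K) + v * (real n / real K)"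
        using l1 l2 u v by (intro add_mono mult_left_mono) auto
      also have "\<dots> = (u + v) * (real n / real K)" by (rule distrib_right[symmetric])
      also have "\<dots> = real n / real K" using uv by simp
      finally show ?thesis using lamconv by linarith
    qed
    have gconc: "g D \<ge> u * g D1 + v * g D2" unfolding g_def D_def
      by (rule det_concave[OF pd1 pd2 u v uv])
    have g1: "g D1 > 0" unfolding g_def using pd_det_pos[OF pd1] by simp
    have g2: "g D2 > 0" unfolding g_def using pd_det_pos[OF pd2] by simp
    have gpos: "u * g D1 + v * g D2 > 0"
    proof (cases "u = 0")
      case True then show ?thesis using uv g2 by simp
    next
      case False then have "u > 0" using u by simp
      then show ?thesis using g1 g2 v by (simp add: add_pos_nonneg)
    qed
    have fD: "4 * Dinf * lambda_D M L Ls S n D \<le> real n * eps^2 * g D"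
    proof (cases "Dinf \<le> 0")
      case True
      have "4 * Dinf * lambda_D M L Ls S n D \<le> 0"
        using True lam_nonneg[OF sD] by (simp add: mult_nonpos_nonneg)
      also have "0 \<le> real n * eps^2 * g D" unfolding g_def by simp
      finally show ?thesis .
    next
      case False
      then have "4 * Dinf \<ge> 0" by simp
      then have "4 * Dinf * lambda_D M L Ls S n D \<le> 4 * Dinf * (u * lambda_D M L Ls S n D1 + v * lambda_D M L Ls S n D2)"
        using lamconv by (rule mult_left_mono[rotated])
      also have "\<dots> = u * (4 * Dinf * lambda_D M L Ls S n D1) + v * (4 * Dinf * lambda_D M L Ls S n D2)"
        by (simp add: algebra_simps)
      also have "\<dots> \<le> u * (real n * eps^2 * g D1) + v * (real n * eps^2 * g D2)"
        using f1 f2 u v by (intro add_mono mult_left_mono) auto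
      also have "\<dots> = real n * eps^2 * (u * g D1 + v * g D2)" by (simp add: algebra_simps)
      also have "\<dots> \<le> real n * eps^2 * g D" using gconc by (intro mult_left_mono) auto
      finally show ?thesis .
    qed
    have kD: "real K \<ge> 12 * c / (g D * eps^2)"
    proof -
      have e2: "eps^2 > 0" using eps by simp
      have "12 * c \<le> real K * (g D1 * eps^2)" using k1 g1 e2 by (simp add: divide_le_eq mult_ac)
      moreover have "12 * c \<le> real K * (g D2 * eps^2)" using k2 g2 e2 by (simp add: divide_le_eq mult_ac)
      ultimately have "u * (12 * c) + v * (12 * c) \<le> u * (real K * (g D1 * eps^2)) + v * (real K * (g D2 * eps^2))"
        using u v by (intro add_mono mult_left_mono) auto
      moreover have "u * (12 * c) + v * (12 * c) = 12 * c"
        using uv distrib_right[of u v "12 * c", symmetric] by simp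
      ultimately have "12 * c \<le> u * (real K * (g D1 * eps^2)) + v * (real K * (g D2 * eps^2))"
        by linarith
      also have "\<dots> = real K * eps^2 * (u * g D1 + v * g D2)" by (simp add: algebra_simps)
      also have "\<dots> \<le> real K * eps^2 * g D" using gconc by (intro mult_left_mono) auto
      finally have "12 * c \<le> real K * (g D * eps^2)" by (simp add: mult_ac)
      moreover have "g D * eps^2 > 0" using gconc gpos e2 by simp
      ultimately show ?thesis by (simp add: divide_le_eq)
    qed
    show "u *\<^sub>R D1 + v *\<^sub>R D2 \<in> {D. pd_mat D \<and> loewner_le (D ** L ** D) D
            \<and> lambda_D M L Ls S n D \<le> real n / real K
            \<and> 4 * Dinf * lambda_D M L Ls S n D \<le> real n * eps^2 * det D powr (1 / real CARD('d))
            \<and> real K \<ge> 12 * c / (det D powr (1 / real CARD('d)) * eps^2)}"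
      using pdD leD lD fD kD unfolding D_def g_def by simp
  qed
qed

end
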